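(* Let $\mathcal{A},\mathcal{B}\in CP(n,m)$. Then: (1) $\hat\rho(\mathcal{A},\mathcal{B})\le\rho(\mathcal{A},\mathcal{B})$. (2) If $\mathcal{A}_1,\mathcal{B}_1\in CP(n,m)$ with $\mathcal{A}_1\preceq\mathcal{A}$ and $\mathcal{B}\preceq\mathcal{B}_1$, then $\rho(\mathcal{A}_1,\mathcal{B}_1)\le\rho(\mathcal{A},\mathcal{B})$ and $\hat\rho(\mathcal{A}_1,\mathcal{B}_1)\le\hat\rho(\mathcal{A},\mathcal{B})$. (3) There exists a weakly optimal $Y\in\mathrm{H}_{+,1,n}$. (4) If there is a weakly optimal $Y$ with $\mathcal{B}(Y)\succ0$ or $\mathcal{A}(Y)\succ0$, and $\rho(\mathcal{A},\mathcal{B})<\infty$, then $\rho(\mathcal{A},\mathcal{B})=\hat\rho(\mathcal{A},\mathcal{B})$. (5) If $\rho(\mathcal{A},\mathcal{B})<\infty$ and either $\mathcal{A}\succ0$ or $\mathcal{B}\succ0$, then $\rho(\mathcal{A},\mathcal{B})=\hat\rho(\mathcal{A},\mathcal{B})$. (6) If $\mathcal{D}_l\in CP(n,m)$ with $\mathcal{D}_l\succ0$ for $l\in\mathbb{N}$ and $\lim_{l\to\infty}\mathcal{D}_l=0$, then $\lim_{l\to\infty}\rho(\mathcal{A},\mathcal{B}+\mathcal{D}_l)=\hat\rho(\mathcal{A},\mathcal{B})$. (7) If $\mathcal{D}_l\in CP(n,m)$ with $\mathcal{D}_l\succ0$ for $l\in\mathbb{N}$, $\lim_{l\to\infty}\mathcal{D}_l=0$,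 and $\mathcal{B}(I_n)\succ0$, then $\lim_{l\to\infty}\rho(\mathcal{A}+\mathcal{D}_l,\mathcal{B})=\rho(\mathcal{A},\mathcal{B})$.
   Context: $\mathrm{H}_n$ is the real space of $n\times n$ complex Hermitian matrices, $\mathrm{H}_{+,n}$ the cone of positive semidefinite ones, $\mathrm{H}_{++,n}$ the positive definite ones, and $\mathrm{H}_{+,1,n}$ the positive semidefinite ones of trace $1$. $X\succeq Y$ ($X\succ Y$) means $X-Y$ is positive semidefinite (definite). $CP(n,m)$ is the set of completely positive maps $\mathcal{C}:\mathrm{H}_n\to\mathrm{H}_m$, i.e. maps of the form $\mathcal{C}(X)=\sum_{j=1}^kT_jXT_j^*$ with $T_j\in\mathbb{C}^{m\times n}$. For $\mathcal{C},\mathcal{D}\in CP(n,m)$, $\mathcal{C}\succeq\mathcal{D}$ (resp. $\mathcal{C}\succ\mathcal{D}$) means $\mathcal{C}(X)\succeq\mathcal{D}(X)$ (resp. $\mathcal{C}(X)\succ\mathcal{D}(X)$) for all $X\in\mathrm{H}_{+,1,n}$. For $\mathcal{A},\mathcal{B}\in CP(n,m)$ and $X\in\mathrm{H}_{+,n}\setminus\{0\}$, $r(\mathcal{A},\mathcal{B},X)=\inf\{t\ge0: t\mathcal{B}(X)-\mathcal{A}(X)\succeq0\}\in[0,\infty]$ ($\inf\emptyset=\infty$); $\rho(\mathcal{A},\mathcal{B})=\inf\{r(\mathcal{A},\mathcal{B},X):X\in\mathrm{H}_{++,n}\}$ and $\hat\rho(\mathcal{A},\mathcal{B})=\inf\{r(\mathcal{A},\mathcal{B},X):X\in\mathrm{H}_{+,n}\setminus\{0\}\}$.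 $Y\in\mathrm{H}_{+,n}\setminus\{0\}$ is weakly optimal if $r(\mathcal{A},\mathcal{B},Y)=\hat\rho(\mathcal{A},\mathcal{B})$. Convergence of maps is in any norm on linear maps $\mathrm{H}_n\to\mathrm{H}_m$. *)

theory Defs
  imports "HOL-Analysis.Analysis" "HOL-Library.Extended_Real"
begin

(* Complex matrices with rows indexed by 'm and columns by 'n: complex^'n^'m *)

definition cadj :: "complex^'n^'m \<Rightarrow> complex^'m^'n" where
  "cadj A = (\<chi> i j. cnj (A $ j $ i))"

definition hermitian :: "complex^'n^'n \<Rightarrow> bool" where
  "hermitian A \<longleftrightarrow> cadj A = A"

definition qform :: "complex^'n^'n \<Rightarrow> complex^'n \<Rightarrow> complex" where
  "qform A v = (\<Sum>i\<in>UNIV. \<Sum>j\<in>UNIV. cnj (v $ i) * A $ i $ j * v $ j)"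

definition psd :: "complex^'n^'n \<Rightarrow> bool" where
  "psd A \<longleftrightarrow> hermitian A \<and> (\<forall>v. 0 \<le> Re (qform A v))"

definition pd :: "complex^'n^'n \<Rightarrow> bool" where
  "pd A \<longleftrightarrow> hermitian A \<and> (\<forall>v. v \<noteq> 0 \<longrightarrow> 0 < Re (qform A v))"

definition mtrace :: "complex^'n^'n \<Rightarrow> complex" where
  "mtrace A = (\<Sum>i\<in>UNIV. A $ i $ i)"

definition density :: "complex^'n^'n \<Rightarrow> bool" where
  "density X \<longleftrightarrow> psd X \<and> mtrace X = 1"

definition is_CP :: "(complex^'n^'n \<Rightarrow> complex^'m^'m) \<Rightarrow> bool" where
  "is_CP C \<longleftrightarrow> (\<exists>k::nat. \<exists>T :: nat \<Rightarrow> complex^'n^'m.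
      C = (\<lambda>X. \<Sum>j<k. T j ** X ** cadj (T j)))"

definition cp_ge :: "(complex^'n^'n \<Rightarrow> complex^'m^'m) \<Rightarrow> (complex^'n^'n \<Rightarrow> complex^'m^'m) \<Rightarrow> bool" where
  "cp_ge C D \<longleftrightarrow> (\<forall>X. density X \<longrightarrow> psd (C X - D X))"

definition cp_gt :: "(complex^'n^'n \<Rightarrow> complex^'m^'m) \<Rightarrow> (complex^'n^'n \<Rightarrow> complex^'m^'m) \<Rightarrow> bool" where
  "cp_gt C D \<longleftrightarrow> (\<forall>X. density X \<longrightarrow> pd (C X - D X))"

(* r(A,B,X) = inf {t \<ge> 0 : t B(X) - A(X) \<succeq> 0} in [0,\<infinity>], inf of empty set = \<infinity> *)
definition rr :: "(complex^'n^'n \<Rightarrow> complex^'m^'m) \<Rightarrow> (complex^'n^'n \<Rightarrow> complex^'m^'m)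
                   \<Rightarrow> complex^'n^'n \<Rightarrow> ereal" where
  "rr A B X = Inf (ereal ` {t::real. 0 \<le> t \<and> psd (t *\<^sub>R B X - A X)})"

definition rho :: "(complex^'n^'n \<Rightarrow> complex^'m^'m) \<Rightarrow> (complex^'n^'n \<Rightarrow> complex^'m^'m) \<Rightarrow> ereal" where
  "rho A B = Inf {rr A B X | X. pd X}"

definition rhohat :: "(complex^'n^'n \<Rightarrow> complex^'m^'m) \<Rightarrow> (complex^'n^'n \<Rightarrow> complex^'m^'m) \<Rightarrow> ereal" where
  "rhohat A B = Inf {rr A B X | X. psd X \<and> X \<noteq> 0}"

definition weakly_optimal :: "(complex^'n^'n \<Rightarrow> complex^'m^'m) \<Rightarrow> (complex^'n^'n \<Rightarrow> complex^'m^'m)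
                   \<Rightarrow> complex^'n^'n \<Rightarrow> bool" where
  "weakly_optimal A B Y \<longleftrightarrow> psd Y \<and> Y \<noteq> 0 \<and> rr A B Y = rhohat A B"

end

theory Submission
  imports Defs
begin


lemma qform_add: "qform (M + N) v = qform M v + qform N v"
  unfolding qform_def by (simp add: algebra_simps sum.distrib)

lemma qform_diff: "qform (M - N) v = qform M v - qform N v"
  unfolding qform_def by (simp add: algebra_simps sum_subtractf)

lemma qform_scaleR: "qform (c *\<^sub>R M) v = complex_of_real c * qform M v"
  unfolding qform_def by (simp add: sum_distrib_left, simp add: scaleR_conv_of_real algebra_simps)

lemma qform_zero[simp]: "qform 0 v = 0"
  unfolding qform_def by simp

lemma qform_uminus: "qform (- M) v = - qform M v"
  unfolding qform_def by (simp add: sum_negf)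

lemma cadj_add: "cadj (M + N) = cadj M + cadj N"
  unfolding cadj_def by (simp add: vec_eq_iff)

lemma cadj_diff: "cadj (M - N) = cadj M - cadj N"
  unfolding cadj_def by (simp add: vec_eq_iff)

lemma cadj_scaleR: "cadj (c *\<^sub>R M) = c *\<^sub>R cadj M"
  unfolding cadj_def by (simp add: vec_eq_iff)

lemma cadj_uminus: "cadj (- M) = - cadj M"
  unfolding cadj_def by (simp add: vec_eq_iff)

lemma cadj_zero[simp]: "cadj 0 = 0"
  unfolding cadj_def by (simp add: vec_eq_iff)

lemma cadj_cadj[simp]: "cadj (cadj M) = M"
  unfolding cadj_def by (simp add: vec_eq_iff)

lemma cadj_mult: "cadj (M ** N) = cadj N ** cadj M"
  unfolding cadj_def matrix_matrix_mult_def by (simp add: vec_eq_iff mult.commute)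

lemma hermitian_add: "hermitian M \<Longrightarrow> hermitian N \<Longrightarrow> hermitian (M + N)"
  unfolding hermitian_def by (simp add: cadj_add)
lemma hermitian_diff: "hermitian M \<Longrightarrow> hermitian N \<Longrightarrow> hermitian (M - N)"
  unfolding hermitian_def by (simp add: cadj_diff)
lemma hermitian_scaleR: "hermitian M \<Longrightarrow> hermitian (c *\<^sub>R M)"
  unfolding hermitian_def by (simp add: cadj_scaleR)
lemma hermitian_uminus: "hermitian M \<Longrightarrow> hermitian (- M)"
  unfolding hermitian_def by (simp add: cadj_uminus)
lemma hermitian_zero[simp]: "hermitian 0"
  unfolding hermitian_def by simp
lemma hermitian_mat1: "hermitian (mat 1)"
  unfolding hermitian_def cadj_def mat_def by (simp add: vec_eq_iff)

lemma psd_add: "psd M \<Longrightarrow> psd N \<Longrightarrow> psd (M + N)"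
  unfolding psd_def by (simp add: hermitian_add qform_add)
lemma psd_scaleR: "psd M \<Longrightarrow> 0 \<le> c \<Longrightarrow> psd (c *\<^sub>R M)"
  unfolding psd_def by (simp add: hermitian_scaleR qform_scaleR)
lemma psd_zero[simp]: "psd 0"
  unfolding psd_def by simp
lemma pd_imp_psd: "pd M \<Longrightarrow> psd M"
proof -
  assume a: "pd M"
  have "0 \<le> Re (qform M v)" for v
  proof (cases "v = 0")
    case True then show ?thesis by (simp add: qform_def)
  next
    case False then show ?thesis using a unfolding pd_def by (simp add: less_imp_le)
  qed
  then show ?thesis using a unfolding pd_def psd_def by simp
qed
lemma pd_add_psd: "pd M \<Longrightarrow> psd N \<Longrightarrow> pd (M + N)"
  unfolding psd_def pd_def by (simp add: hermitian_add qform_add add_pos_nonneg)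
lemma pd_scaleR: "pd M \<Longrightarrow> 0 < c \<Longrightarrow> pd (c *\<^sub>R M)"
  unfolding pd_def by (simp add: hermitian_scaleR qform_scaleR)
lemma psd_scaleR_iff: "0 < c \<Longrightarrow> psd (c *\<^sub>R M) \<longleftrightarrow> psd M"
proof
  assume "0 < c" "psd (c *\<^sub>R M)"
  then show "psd M" using psd_scaleR[of "c *\<^sub>R M" "inverse c"] by simp
qed (simp add: psd_scaleR)



lemma if01_r: "x * (if P then 1 else 0) = (if P then x else (0::complex))" by simp
lemma if01_l: "(if P then 1 else 0) * x = (if P then x else (0::complex))" by simp
lemma cnj_if: "cnj (if P then a else b) = (if P then cnj a else cnj b)" by simp

lemma norm_vec_sq: "(norm (v::complex^'n))\<^sup>2 = (\<Sum>i\<in>UNIV. (cmod (v $ i))\<^sup>2)"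
  unfolding norm_vec_def L2_set_def by (simp add: sum_nonneg)

lemma cnj_mult_self: "cnj z * z = complex_of_real ((cmod z)\<^sup>2)"
  by (metis complex_norm_square mult.commute of_real_power)

lemma qform_mat1: "qform (mat 1) v = complex_of_real ((norm v)\<^sup>2)"
  unfolding qform_def mat_def norm_vec_sq
  apply (simp only: vec_lambda_beta if01_r if_distrib[of "\<lambda>x. x * _"] mult_zero_left sum.delta sum.delta' finite UNIV_I if_True)
  apply (simp add: cnj_mult_self)
  done

lemma qform_axis: "qform M (axis i 1) = M $ i $ i"
  unfolding qform_def axis_def
  by (simp only: cnj_if complex_cnj_one complex_cnj_zero if01_r if01_l vec_lambda_beta sum.delta sum.delta' finite UNIV_I if_True)

lemma qform_two:
  "qform M (\<chi> k. (if k = i then a else 0) + (if k = j then b else 0)) =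
     cnj a * M$i$i * a + cnj a * M$i$j * b + cnj b * M$j$i * a + cnj b * M$j$j * b"
  unfolding qform_def
  apply (simp only: vec_lambda_beta complex_cnj_add cnj_if complex_cnj_zero distrib_left distrib_right sum.distrib)
  apply (simp only: mult_zero_left mult_zero_right if_distrib[of "\<lambda>x. x * _"] if_distrib[of "\<lambda>x. _ * x"] sum.delta sum.delta' finite UNIV_I if_True sum.distrib)
  apply (simp add: add_ac)
  done

lemma qform_homog: "qform M (c *\<^sub>R v) = complex_of_real (c\<^sup>2) * qform M v"
  unfolding qform_def
  apply (simp only: vector_scaleR_component)
  apply (simp only: scaleR_conv_of_real complex_cnj_mult complex_cnj_complex_of_real)
  apply (simp add: sum_distrib_left power2_eq_square mult_ac)
  done

definition cbound :: "complex^'n^'n \<Rightarrow> real" where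
  "cbound M = (\<Sum>i\<in>UNIV. \<Sum>j\<in>UNIV. cmod (M $ i $ j))"

lemma qform_bound: "cmod (qform M v) \<le> cbound M * (norm v)\<^sup>2"
proof -
  have "cmod (qform M v) \<le> (\<Sum>i\<in>UNIV. \<Sum>j\<in>UNIV. cmod (cnj (v $ i) * M $ i $ j * v $ j))"
    unfolding qform_def by (rule order_trans[OF norm_sum sum_mono[OF norm_sum]])
  also have "\<dots> \<le> (\<Sum>i\<in>UNIV. \<Sum>j\<in>UNIV. cmod (M $ i $ j) * (norm v)\<^sup>2)"
  proof (intro sum_mono)
    fix i j
    have "cmod (cnj (v $ i) * M $ i $ j * v $ j) = cmod (v $ i) * cmod (M $ i $ j) * cmod (v $ j)"
      by (simp add: norm_mult)
    also have "\<dots> \<le> norm v * cmod (M $ i $ j) * norm v"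
      by (intro mult_mono) (auto simp: Finite_Cartesian_Product.norm_nth_le)
    finally show "cmod (cnj (v $ i) * M $ i $ j * v $ j) \<le> cmod (M $ i $ j) * (norm v)\<^sup>2"
      by (simp add: power2_eq_square algebra_simps)
  qed
  also have "\<dots> = cbound M * (norm v)\<^sup>2"
    unfolding cbound_def by (simp add: sum_distrib_right)
  finally show ?thesis .
qed

lemma cbound_le: "cbound M \<le> real (CARD('n)) * real (CARD('n)) * norm (M::complex^'n^'n)"
proof -
  have "cbound M \<le> (\<Sum>i\<in>(UNIV::'n set). \<Sum>j\<in>(UNIV::'n set). norm M)"
    unfolding cbound_def
    by (intro sum_mono) (rule order_trans[OF Finite_Cartesian_Product.norm_nth_le Finite_Cartesian_Product.norm_nth_le])
  then show ?thesis by simp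
qed

lemma norm_le_cbound: "norm (M::complex^'n^'n) \<le> cbound M"
proof -
  have "norm M \<le> (\<Sum>i\<in>UNIV. norm (M $ i))"
    unfolding norm_vec_def by (rule L2_set_le_sum) simp
  also have "\<dots> \<le> (\<Sum>i\<in>UNIV. \<Sum>j\<in>UNIV. cmod (M $ i $ j))"
    by (intro sum_mono) (simp add: norm_vec_def L2_set_le_sum)
  finally show ?thesis unfolding cbound_def .
qed



lemma herm_entry: "hermitian X \<Longrightarrow> X $ i $ j = cnj (X $ j $ i)"
  unfolding hermitian_def cadj_def by (metis vec_lambda_beta)

lemma psd_diag: assumes "psd X" shows "Im (X$i$i) = 0" "0 \<le> Re (X$i$i)"
proof -
  have "X$i$i = cnj (X$i$i)" using assms herm_entry unfolding psd_def by blast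
  then show "Im (X$i$i) = 0" by (metis Reals_cnj_iff complex_is_Real_iff)
  show "0 \<le> Re (X$i$i)" using assms unfolding psd_def by (metis qform_axis)
qed

lemma psd_offdiag: assumes "psd X" shows "2 * cmod (X$i$j) \<le> Re (X$i$i) + Re (X$j$j)"
proof (cases "X$i$j = 0")
  case True then show ?thesis using psd_diag[OF assms] by (simp add: add_nonneg_nonneg)
next
  case False
  define z where "z = X$i$j"
  define r where "r = cmod z"
  have r: "r > 0" using False unfolding r_def z_def by simp
  define b where "b = - (cnj z / complex_of_real r)"
  have zc: "z * cnj z = complex_of_real (r^2)" unfolding r_def
    by (metis complex_norm_square of_real_power)
  have zb: "z * b = - complex_of_real r" unfolding b_def using r zc
    by (simp add: power2_eq_square field_simps)
  have bb: "cnj b * b = 1" unfolding b_def using r zc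
    by (simp add: power2_eq_square field_simps mult.commute)
  have xji: "X$j$i = cnj z" unfolding z_def using assms herm_entry unfolding psd_def by blast
  have "cnj b * X$j$i = cnj (z * b)" using xji by (simp add: mult.commute)
  also have "\<dots> = - complex_of_real r" using zb by simp
  finally have e2: "cnj b * X$j$i = - complex_of_real r" .
  have "0 \<le> Re (qform X (\<chi> k. (if k = i then 1 else 0) + (if k = j then b else 0)))"
    using assms unfolding psd_def by blast
  also have "qform X (\<chi> k. (if k = i then 1 else 0) + (if k = j then b else 0)) =
     X$i$i + z * b + cnj b * X$j$i + (cnj b * b) * X$j$j"
    unfolding qform_two z_def by (simp add: mult_ac)
  also have "\<dots> = X$i$i - 2 * complex_of_real r + X$j$j"
    unfolding zb e2 bb by simp
  finally have "0 \<le> Re (X$i$i) - 2 * r + Re (X$j$j)" by simp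
  then show ?thesis unfolding r_def z_def by simp
qed

lemma mtrace_scaleR: "mtrace (c *\<^sub>R X) = c *\<^sub>R mtrace X"
  unfolding mtrace_def by (simp add: scaleR_sum_right)

lemma mtrace_psd: assumes "psd X"
  shows "mtrace X = complex_of_real (Re (mtrace X))" "0 \<le> Re (mtrace X)"
proof -
  have "Im (mtrace X) = 0" unfolding mtrace_def using psd_diag(1)[OF assms] by (simp add: Im_sum)
  then show "mtrace X = complex_of_real (Re (mtrace X))" by (simp add: complex_eq_iff)
  show "0 \<le> Re (mtrace X)" unfolding mtrace_def using psd_diag(2)[OF assms] by (simp add: Re_sum sum_nonneg)
qed

lemma psd_trace_pos: assumes "psd X" "X \<noteq> 0" shows "0 < Re (mtrace X)"
proof (rule ccontr)
  assume "\<not> 0 < Re (mtrace X)"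
  then have "Re (mtrace X) = 0" using mtrace_psd(2)[OF assms(1)] by simp
  then have "(\<Sum>i\<in>UNIV. Re (X$i$i)) = 0" unfolding mtrace_def by (simp add: Re_sum)
  then have d: "Re (X$i$i) = 0" for i
    using sum_nonneg_eq_0_iff[of UNIV "\<lambda>i. Re (X$i$i)"] psd_diag(2)[OF assms(1)] by simp
  have "X$i$j = 0" for i j using psd_offdiag[OF assms(1), of i j] d[of i] d[of j] by simp
  then have "X = 0" by (simp add: vec_eq_iff)
  then show False using assms by simp
qed

lemma mtrace_inv: "mtrace X = complex_of_real t \<Longrightarrow> 0 < t \<Longrightarrow> mtrace (inverse t *\<^sub>R X) = 1"
  by (subst mtrace_scaleR) (simp add: scaleR_conv_of_real)

lemma density_norm: assumes "psd X" "X \<noteq> 0"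
  shows "density (inverse (Re (mtrace X)) *\<^sub>R X)"
    "X = Re (mtrace X) *\<^sub>R (inverse (Re (mtrace X)) *\<^sub>R X)"
proof -
  have p: "0 < Re (mtrace X)" by (rule psd_trace_pos[OF assms])
  show "density (inverse (Re (mtrace X)) *\<^sub>R X)"
    unfolding density_def using p psd_scaleR[OF assms(1), of "inverse (Re (mtrace X))"]
    by (simp add: mtrace_inv[OF mtrace_psd(1)[OF assms(1)] p])
  show "X = Re (mtrace X) *\<^sub>R (inverse (Re (mtrace X)) *\<^sub>R X)" using p by simp
qed

lemma density_psd: "density X \<Longrightarrow> psd X" unfolding density_def by simp
lemma density_nz: "density X \<Longrightarrow> X \<noteq> 0" unfolding density_def mtrace_def by auto

lemma density_entry: assumes "density X" shows "cmod (X$i$j) \<le> 1"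
proof -
  have ps: "psd X" using assms density_psd by blast
  have t: "(\<Sum>k\<in>UNIV. Re (X$k$k)) = 1" using assms unfolding density_def mtrace_def
    by (metis Re_sum one_complex.simps(1))
  have "Re (X$k$k) \<le> 1" for k
    using member_le_sum[of k UNIV "\<lambda>k. Re (X$k$k)"] psd_diag(2)[OF ps] t by simp
  then show ?thesis using psd_offdiag[OF ps, of i j] by (smt (verit))
qed

lemma density_bound: fixes X :: "complex^'n^'n" assumes "density X" shows "norm X \<le> real (CARD('n)) * real (CARD('n))"
proof -
  have "norm X \<le> cbound X" by (rule norm_le_cbound)
  also have "\<dots> \<le> (\<Sum>i\<in>(UNIV::'n set). \<Sum>j\<in>(UNIV::'n set). 1)"
    unfolding cbound_def by (intro sum_mono density_entry[OF assms])
  finally show ?thesis by simp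
qed

lemma psd_mat1: "psd (mat 1)"
  unfolding psd_def using hermitian_mat1 by (simp add: qform_mat1)

lemma exists_nz: "\<exists>v::complex^'m. v \<noteq> 0"
  by (rule exI[of _ "axis undefined 1"]) (simp add: axis_eq_0_iff)

lemma pd_mat1: "pd (mat 1)"
  unfolding pd_def using hermitian_mat1 by (simp add: qform_mat1)

lemma pd_nz: "pd X \<Longrightarrow> X \<noteq> 0"
  unfolding pd_def using exists_nz by fastforce

lemma mtrace_mat1: "mtrace (mat 1 :: complex^'n^'n) = of_nat CARD('n)"
  unfolding mtrace_def mat_def by simp

lemma density_exists: "density (inverse (real CARD('n)) *\<^sub>R (mat 1 :: complex^'n^'n))"
  unfolding density_def
  by (intro conjI psd_scaleR psd_mat1 mtrace_inv) (auto simp: mtrace_mat1)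



lemma tendsto_entry: "M \<longlonglongrightarrow> L \<Longrightarrow> (\<lambda>k. M k $ i $ j) \<longlonglongrightarrow> L $ i $ j"
  by (intro tendsto_vec_nth)

lemma tendsto_qform: "M \<longlonglongrightarrow> L \<Longrightarrow> (\<lambda>k. qform (M k) v) \<longlonglongrightarrow> qform L v"
  unfolding qform_def by (intro tendsto_intros tendsto_entry)

lemma tendsto_mtrace: "M \<longlonglongrightarrow> L \<Longrightarrow> (\<lambda>k. mtrace (M k)) \<longlonglongrightarrow> mtrace L"
  unfolding mtrace_def by (intro tendsto_intros tendsto_entry)

lemma psd_limit: assumes "\<And>k. psd (M k)" "M \<longlonglongrightarrow> L" shows "psd L"
proof -
  have e: "L $ i $ j = cnj (L $ j $ i)" for i j
  proof -
    have "(\<lambda>k. M k $ i $ j) \<longlonglongrightarrow> L $ i $ j" by (rule tendsto_entry[OF assms(2)])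
    moreover have "(\<lambda>k. M k $ i $ j) \<longlonglongrightarrow> cnj (L $ j $ i)"
    proof -
      have "(\<lambda>k. cnj (M k $ j $ i)) \<longlonglongrightarrow> cnj (L $ j $ i)"
        by (intro tendsto_cnj tendsto_entry[OF assms(2)])
      moreover have "M k $ i $ j = cnj (M k $ j $ i)" for k
        using assms(1) herm_entry unfolding psd_def by blast
      ultimately show ?thesis by simp
    qed
    ultimately show ?thesis by (rule LIMSEQ_unique)
  qed
  have "cadj L $ i $ j = L $ i $ j" for i j by (simp add: cadj_def e[of i j])
  then have "hermitian L" unfolding hermitian_def by (simp add: vec_eq_iff)
  moreover have "0 \<le> Re (qform L v)" for v
  proof (rule tendsto_lowerbound)
    show "((\<lambda>k. Re (qform (M k) v)) \<longlongrightarrow> Re (qform L v)) sequentially"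
      by (intro tendsto_Re tendsto_qform[OF assms(2)])
    show "\<forall>\<^sub>F k in sequentially. 0 \<le> Re (qform (M k) v)"
      using assms(1) unfolding psd_def by simp
  qed simp
  ultimately show ?thesis unfolding psd_def by simp
qed

lemma density_compact: "compact {X :: complex^'n^'n. density X}"
proof (subst compact_eq_bounded_closed, intro conjI)
  show "bounded {X :: complex^'n^'n. density X}"
    unfolding bounded_iff using density_bound by blast
  show "closed {X :: complex^'n^'n. density X}"
    unfolding closed_sequential_limits
  proof (intro allI impI, elim conjE)
    fix M :: "nat \<Rightarrow> complex^'n^'n" and L
    assume d: "\<forall>k. M k \<in> {X. density X}" and t: "M \<longlonglongrightarrow> L"
    have "psd L" using d by (intro psd_limit[OF _ t]) (simp add: density_psd)
    moreover have "mtrace L = 1"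
    proof -
      have "(\<lambda>k. mtrace (M k)) \<longlonglongrightarrow> mtrace L" by (rule tendsto_mtrace[OF t])
      moreover have "mtrace (M k) = 1" for k using d unfolding density_def by simp
      then have "(\<lambda>k. mtrace (M k)) \<longlonglongrightarrow> 1" by simp
      ultimately show ?thesis using LIMSEQ_unique by blast
    qed
    ultimately show "L \<in> {X. density X}" unfolding density_def by simp
  qed
qed



lemma cont_qform: fixes S :: "(complex^'n) set" and P :: "complex^'n^'n"
  shows "continuous_on S (\<lambda>v. Re (qform P v))"
proof -
  have c: "continuous_on S (\<lambda>v::complex^'n. v $ i)" for i
    by (rule linear_continuous_on[OF bounded_linear_vec_nth])
  show ?thesis unfolding qform_def
    by (intro continuous_intros c)
qed

lemma pd_lambda: assumes "pd (P::complex^'n^'n)"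
  shows "\<exists>l>0. \<forall>v. l * (norm v)\<^sup>2 \<le> Re (qform P v)"
proof -
  obtain w :: "complex^'n" where "w \<noteq> 0" using exists_nz by blast
  then have "sgn w \<in> sphere (0::complex^'n) 1" by (simp add: norm_sgn)
  then have "sphere (0::complex^'n) 1 \<noteq> {}" by blast
  then obtain x0 where x0: "x0 \<in> sphere (0::complex^'n) 1"
    "\<forall>y\<in>sphere 0 1. Re (qform P x0) \<le> Re (qform P y)"
    using continuous_attains_inf[OF compact_sphere _ cont_qform] by blast
  have "x0 \<noteq> 0" using x0(1) by auto
  then have pos: "0 < Re (qform P x0)" using assms unfolding pd_def by auto
  show ?thesis
  proof (intro exI[of _ "Re (qform P x0)"] conjI allI pos)
    fix v :: "complex^'n"
    show "Re (qform P x0) * (norm v)\<^sup>2 \<le> Re (qform P v)"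
    proof (cases "v = 0")
      case True then show ?thesis by (simp add: qform_def)
    next
      case False
      define u where "u = inverse (norm v) *\<^sub>R v"
      have u: "u \<in> sphere 0 1" unfolding u_def using False by simp
      have "v = norm v *\<^sub>R u" unfolding u_def using False by simp
      then have "qform P v = complex_of_real ((norm v)\<^sup>2) * qform P u"
        using qform_homog[of P "norm v" u] by simp
      then have "Re (qform P v) = (norm v)\<^sup>2 * Re (qform P u)" by simp
      moreover have "Re (qform P x0) \<le> Re (qform P u)" using x0(2) u by blast
      ultimately show ?thesis using mult_right_mono[OF _ zero_le_power2] by (simp add: mult.commute)
    qed
  qed
qed

lemma pd_nbhd: assumes "pd (P::complex^'n^'n)"
  shows "\<exists>e>0. \<forall>M. hermitian M \<longrightarrow> cbound M \<le> e \<longrightarrow> psd (P + M)"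
proof -
  obtain l where l: "l > 0" "\<forall>v. l * (norm v)\<^sup>2 \<le> Re (qform P v)"
    using pd_lambda[OF assms] by blast
  show ?thesis
  proof (intro exI[of _ l] conjI allI impI l(1))
    fix M :: "complex^'n^'n" assume h: "hermitian M" and c: "cbound M \<le> l"
    have "0 \<le> Re (qform (P + M) v)" for v
    proof -
      have "\<bar>Re (qform M v)\<bar> \<le> cbound M * (norm v)\<^sup>2"
        using qform_bound[of M v] abs_Re_le_cmod order_trans by blast
      also have "\<dots> \<le> l * (norm v)\<^sup>2" using c by (simp add: mult_right_mono)
      finally show ?thesis using l(2)[rule_format, of v] by (simp add: qform_add)
    qed
    moreover have "hermitian (P + M)" using assms h unfolding pd_def by (simp add: hermitian_add)
    ultimately show "psd (P + M)" unfolding psd_def by simp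
  qed
qed

lemma cbound_scaleR: "cbound (c *\<^sub>R M) = \<bar>c\<bar> * cbound M"
  unfolding cbound_def by (simp add: sum_distrib_left)

lemma cbound_uminus: "cbound (- M) = cbound M"
  unfolding cbound_def by simp

lemma cbound_nonneg: "0 \<le> cbound M"
  unfolding cbound_def by (simp add: sum_nonneg)


lemma qform_conj: "qform (T ** X ** cadj T) v = qform X (cadj T *v v)"
proof -
  have "qform (T ** X ** cadj T) v =
     (\<Sum>i\<in>UNIV. \<Sum>j\<in>UNIV. \<Sum>l\<in>UNIV. \<Sum>k\<in>UNIV. cnj (v$i) * T$i$k * X$k$l * cnj (T$j$l) * v$j)"
    unfolding qform_def matrix_matrix_mult_def cadj_def
    by (simp add: sum_distrib_left sum_distrib_right mult_ac)
  also have "\<dots> = (\<Sum>k\<in>UNIV. \<Sum>l\<in>UNIV. \<Sum>i\<in>UNIV. \<Sum>j\<in>UNIV. cnj (v$i) * T$i$k * X$k$l * cnj (T$j$l) * v$j)"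
  proof -
    have "(\<Sum>i\<in>UNIV. \<Sum>j\<in>UNIV. \<Sum>l\<in>UNIV. \<Sum>k\<in>UNIV. cnj (v$i) * T$i$k * X$k$l * cnj (T$j$l) * v$j)
      = (\<Sum>i\<in>UNIV. \<Sum>k\<in>UNIV. \<Sum>l\<in>UNIV. \<Sum>j\<in>UNIV. cnj (v$i) * T$i$k * X$k$l * cnj (T$j$l) * v$j)"
      apply (rule sum.cong[OF refl])
      apply (subst sum.swap)
      apply (rule trans[OF sum.swap])
      apply (rule sum.cong[OF refl])
      apply (rule sum.swap)
      done
    also have "\<dots> = (\<Sum>k\<in>UNIV. \<Sum>i\<in>UNIV. \<Sum>l\<in>UNIV. \<Sum>j\<in>UNIV. cnj (v$i) * T$i$k * X$k$l * cnj (T$j$l) * v$j)"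
      by (rule sum.swap)
    also have "\<dots> = (\<Sum>k\<in>UNIV. \<Sum>l\<in>UNIV. \<Sum>i\<in>UNIV. \<Sum>j\<in>UNIV. cnj (v$i) * T$i$k * X$k$l * cnj (T$j$l) * v$j)"
      by (rule sum.cong[OF refl], rule sum.swap)
    finally show ?thesis .
  qed
  also have "\<dots> = qform X (cadj T *v v)"
    unfolding qform_def matrix_vector_mult_def cadj_def
    by (simp add: sum_distrib_left sum_distrib_right mult_ac cnj_sum)
  finally show ?thesis .
qed

lemma psd_conj: assumes "psd X" shows "psd (T ** X ** cadj T)"
proof -
  have "hermitian (T ** X ** cadj T)"
    using assms unfolding psd_def hermitian_def by (simp add: cadj_mult matrix_mul_assoc)
  then show ?thesis using assms unfolding psd_def by (simp add: qform_conj)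
qed

lemma mm_rdistrib: "((A::complex^'n^'m) + B) ** C = A ** C + B ** C"
  by (simp add: matrix_matrix_mult_def vec_eq_iff sum.distrib distrib_right)

definition posmap :: "(complex^'n^'n \<Rightarrow> complex^'m^'m) \<Rightarrow> bool" where
  "posmap A \<longleftrightarrow> linear A \<and> (\<forall>X. psd X \<longrightarrow> psd (A X))"

lemma psd_sum: "(\<And>j. j \<in> S \<Longrightarrow> psd (f j)) \<Longrightarrow> psd (sum f S)"
  by (induction S rule: infinite_finite_induct) (auto intro: psd_add)

lemma CP_posmap: fixes A :: "complex^'n^'n \<Rightarrow> complex^'m^'m" assumes "is_CP A" shows "posmap A"
proof -
  obtain k and T :: "nat \<Rightarrow> complex^'n^'m" where A: "A = (\<lambda>X. \<Sum>j<k. T j ** X ** cadj (T j))"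
    using assms unfolding is_CP_def by blast
  have "linear A"
    unfolding A
    by (rule linearI)
       (simp_all add: matrix_add_ldistrib mm_rdistrib sum.distrib scalar_matrix_assoc
                      matrix_scalar_ac scaleR_sum_right)
  moreover have "psd (A X)" if "psd X" for X
    unfolding A by (intro psd_sum psd_conj that)
  ultimately show ?thesis unfolding posmap_def by blast
qed

lemma posmap_add: "posmap A \<Longrightarrow> posmap B \<Longrightarrow> posmap (\<lambda>X. A X + B X)"
  unfolding posmap_def by (auto intro: linear_compose_add psd_add)

lemma posmap_bl: "posmap A \<Longrightarrow> bounded_linear A"
  unfolding posmap_def using linear_conv_bounded_linear by blast

lemma posmap_lin: assumes "posmap A"
  shows "A (X + Y) = A X + A Y" "A (X - Y) = A X - A Y" "A (c *\<^sub>R X) = c *\<^sub>R A X" "A 0 = 0"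
  using assms unfolding posmap_def
  by (auto simp: linear_add linear_diff linear_scale linear_0)

lemma posmap_psd: "posmap A \<Longrightarrow> psd X \<Longrightarrow> psd (A X)"
  unfolding posmap_def by blast

lemma posmap_tendsto: "posmap A \<Longrightarrow> X \<longlonglongrightarrow> L \<Longrightarrow> (\<lambda>k. A (X k)) \<longlonglongrightarrow> A L"
  by (rule bounded_linear.tendsto[OF posmap_bl])



lemma rr_le: "0 \<le> t \<Longrightarrow> psd (t *\<^sub>R B X - A X) \<Longrightarrow> rr A B X \<le> ereal t"
  unfolding rr_def by (rule Inf_lower) auto

lemma rr_nonneg: "0 \<le> rr A B X"
  unfolding rr_def by (rule Inf_greatest) auto

lemma rr_less: "rr A B X < ereal s \<Longrightarrow> \<exists>t. 0 \<le> t \<and> t < s \<and> psd (t *\<^sub>R B X - A X)"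
  unfolding rr_def by (auto simp: Inf_less_iff)

lemma rr_scale: assumes "posmap A" "posmap B" "0 < c" shows "rr A B (c *\<^sub>R X) = rr A B X"
proof -
  have eq: "t *\<^sub>R B (c *\<^sub>R X) - A (c *\<^sub>R X) = c *\<^sub>R (t *\<^sub>R B X - A X)" for t
    using posmap_lin(3)[OF assms(1)] posmap_lin(3)[OF assms(2)] by (simp add: algebra_simps)
  have "{t. 0 \<le> t \<and> psd (t *\<^sub>R B (c *\<^sub>R X) - A (c *\<^sub>R X))} = {t. 0 \<le> t \<and> psd (t *\<^sub>R B X - A X)}"
    unfolding eq psd_scaleR_iff[OF assms(3)] by simp
  then show ?thesis unfolding rr_def by simp
qed

lemma rho_le: "pd X \<Longrightarrow> rho A B \<le> rr A B X"
  unfolding rho_def by (rule Inf_lower) auto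

lemma rhohat_le: "psd X \<Longrightarrow> X \<noteq> 0 \<Longrightarrow> rhohat A B \<le> rr A B X"
  unfolding rhohat_def by (rule Inf_lower) auto

lemma rho_less: "rho A B < a \<Longrightarrow> \<exists>X. pd X \<and> rr A B X < a"
  unfolding rho_def by (auto simp: Inf_less_iff)

lemma rhohat_nonneg: "0 \<le> rhohat A B"
  unfolding rhohat_def by (rule Inf_greatest) (auto simp: rr_nonneg)

lemma rho_nonneg: "0 \<le> rho A B"
  unfolding rho_def by (rule Inf_greatest) (auto simp: rr_nonneg)

lemma rhohat_dens: assumes "posmap A" "posmap B"
  shows "rhohat A B = Inf {rr A B X | X. density X}"
proof -
  have "{rr A B X | X. psd X \<and> X \<noteq> 0} = {rr A B X | X. density X}"
  proof (intro equalityI subsetI)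
    fix r assume "r \<in> {rr A B X | X. psd X \<and> X \<noteq> 0}"
    then obtain X where X: "psd X" "X \<noteq> 0" "r = rr A B X" by blast
    have "rr A B X = rr A B (inverse (Re (mtrace X)) *\<^sub>R X)"
      using rr_scale[OF assms, of "inverse (Re (mtrace X))" X] psd_trace_pos[OF X(1,2)] by simp
    then show "r \<in> {rr A B X | X. density X}" using X density_norm(1)[OF X(1,2)] by blast
  next
    fix r assume "r \<in> {rr A B X | X. density X}"
    then show "r \<in> {rr A B X | X. psd X \<and> X \<noteq> 0}" using density_psd density_nz by blast
  qed
  then show ?thesis unfolding rhohat_def by simp
qed

lemma rhohat_less: assumes "posmap A" "posmap B" "rhohat A B < a" shows "\<exists>X. density X \<and> rr A B X < a"
  using assms(3) unfolding rhohat_dens[OF assms(1,2)] by (auto simp: Inf_less_iff)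

lemma rhohat_le_dens: "density X \<Longrightarrow> rhohat A B \<le> rr A B X"
  by (rule rhohat_le) (auto simp: density_psd density_nz)

lemma part1: "rhohat A B \<le> rho A B"
  unfolding rho_def rhohat_def
proof (rule Inf_superset_mono, rule subsetI)
  fix r assume "r \<in> {rr A B X | X. pd X}"
  then obtain X where X: "pd X" "r = rr A B X" by blast
  have "psd X" "X \<noteq> 0" using pd_imp_psd[OF X(1)] pd_nz[OF X(1)] by auto
  then show "r \<in> {rr A B X | X. psd X \<and> X \<noteq> 0}" using X(2) by blast
qed

lemma ge_psd: assumes "cp_ge C D" "posmap C" "posmap D" "psd X" shows "psd (C X - D X)"
proof (cases "X = 0")
  case True then show ?thesis using posmap_lin(4)[OF assms(2)] posmap_lin(4)[OF assms(3)] by simp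
next
  case False
  define s where "s = Re (mtrace X)"
  define Y where "Y = inverse s *\<^sub>R X"
  have dY: "density Y" unfolding Y_def s_def by (rule density_norm(1)[OF assms(4) False])
  have X: "X = s *\<^sub>R Y" unfolding Y_def s_def by (rule density_norm(2)[OF assms(4) False])
  have s: "0 < s" unfolding s_def by (rule psd_trace_pos[OF assms(4) False])
  have "psd (C Y - D Y)" using assms(1) dY unfolding cp_ge_def by blast
  then have "psd (s *\<^sub>R (C Y - D Y))" using s by (simp add: psd_scaleR)
  moreover have "C X - D X = s *\<^sub>R (C Y - D Y)"
    unfolding X using posmap_lin(3)[OF assms(2)] posmap_lin(3)[OF assms(3)] by (simp add: algebra_simps)
  ultimately show ?thesis by simp
qed

lemma rr_mono: assumes "posmap A" "posmap A1" "posmap B" "posmap B1" "cp_ge A A1" "cp_ge B1 B" "psd X"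
  shows "rr A1 B1 X \<le> rr A B X"
proof -
  have "{t. 0 \<le> t \<and> psd (t *\<^sub>R B X - A X)} \<subseteq> {t. 0 \<le> t \<and> psd (t *\<^sub>R B1 X - A1 X)}"
  proof safe
    fix t :: real assume t: "0 \<le> t" "psd (t *\<^sub>R B X - A X)"
    have eq: "t *\<^sub>R B1 X - A1 X = (t *\<^sub>R B X - A X) + t *\<^sub>R (B1 X - B X) + (A X - A1 X)"
      by (simp add: algebra_simps)
    have "psd (B1 X - B X)" by (rule ge_psd[OF assms(6,4,3,7)])
    moreover have "psd (A X - A1 X)" by (rule ge_psd[OF assms(5,1,2,7)])
    then show "psd (t *\<^sub>R B1 X - A1 X)" unfolding eq
      by (rule psd_add[OF psd_add[OF t(2) psd_scaleR[OF \<open>psd (B1 X - B X)\<close> t(1)]]])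
  qed
  then show ?thesis unfolding rr_def by (intro Inf_superset_mono image_mono)
qed

lemma part2: assumes "posmap A" "posmap A1" "posmap B" "posmap B1" "cp_ge A A1" "cp_ge B1 B"
  shows "rho A1 B1 \<le> rho A B \<and> rhohat A1 B1 \<le> rhohat A B"
proof
  show "rho A1 B1 \<le> rho A B" unfolding rho_def
  proof (rule Inf_mono)
    fix r assume "r \<in> {rr A B X | X. pd X}"
    then obtain X where "pd X" "r = rr A B X" by blast
    then show "\<exists>r'\<in>{rr A1 B1 X | X. pd X}. r' \<le> r"
      using rr_mono[OF assms pd_imp_psd] by blast
  qed
  show "rhohat A1 B1 \<le> rhohat A B" unfolding rhohat_def
  proof (rule Inf_mono)
    fix r assume "r \<in> {rr A B X | X. psd X \<and> X \<noteq> 0}"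
    then obtain X where "psd X" "X \<noteq> 0" "r = rr A B X" by blast
    then show "\<exists>r'\<in>{rr A1 B1 X | X. psd X \<and> X \<noteq> 0}. r' \<le> r"
      using rr_mono[OF assms] by blast
  qed
qed



lemma density_seq:
  fixes X :: "nat \<Rightarrow> complex^'n^'n"
  assumes "\<And>k. density (X k)"
  obtains Y \<sigma> where "density Y" "strict_mono \<sigma>" "(\<lambda>k. X (\<sigma> k)) \<longlonglongrightarrow> Y"
proof -
  have "seq_compact {X :: complex^'n^'n. density X}"
    by (rule compact_imp_seq_compact[OF density_compact])
  then obtain Y \<sigma> where "Y \<in> {X. density X}" "strict_mono \<sigma>" "(X \<circ> \<sigma>) \<longlonglongrightarrow> Y"
    unfolding seq_compact_def using assms by blast
  then show ?thesis using that by (auto simp: o_def)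
qed

lemma part3: fixes A B :: "complex^'n^'n \<Rightarrow> complex^'m^'m" assumes "posmap A" "posmap B"
  shows "\<exists>Y. density Y \<and> weakly_optimal A B Y"
proof (cases "rhohat A B = \<infinity>")
  case True
  define Y0 where "Y0 = inverse (real CARD('n)) *\<^sub>R (mat 1 :: complex^'n^'n)"
  have d: "density Y0" unfolding Y0_def by (rule density_exists)
  have "rr A B Y0 = \<infinity>" using rhohat_le_dens[OF d, of A B] True by simp
  then show ?thesis using d True unfolding weakly_optimal_def
    by (intro exI[of _ Y0]) (auto simp: density_psd density_nz)
next
  case False
  have "0 \<le> rhohat A B" by (rule rhohat_nonneg)
  then obtain \<rho> where \<rho>: "rhohat A B = ereal \<rho>" using False
    by (cases "rhohat A B") auto
  have "\<forall>k. \<exists>p. density (fst p) \<and> 0 \<le> snd p \<and> snd p < \<rho> + inverse (real (Suc k)) \<and> psd (snd p *\<^sub>R B (fst p) - A (fst p))"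
  proof
    fix k
    have "rhohat A B < ereal (\<rho> + inverse (real (Suc k)))" using \<rho> by simp
    then obtain X where X: "density X" "rr A B X < ereal (\<rho> + inverse (real (Suc k)))"
      using rhohat_less[OF assms] by blast
    then show "\<exists>p. density (fst p) \<and> 0 \<le> snd p \<and> snd p < \<rho> + inverse (real (Suc k)) \<and> psd (snd p *\<^sub>R B (fst p) - A (fst p))"
      using rr_less[OF X(2)] by (metis fst_conv snd_conv)
  qed
  then obtain p where p: "\<forall>k. density (fst (p k)) \<and> 0 \<le> snd (p k) \<and> snd (p k) < \<rho> + inverse (real (Suc k)) \<and> psd (snd (p k) *\<^sub>R B (fst (p k)) - A (fst (p k)))"
    by (rule choice[THEN exE])
  define X where "X k = fst (p k)" for k
  define t where "t k = snd (p k)" for k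
  have Xt: "\<And>k. density (X k)" "\<And>k. 0 \<le> t k"
    "\<And>k. t k < \<rho> + inverse (real (Suc k))" "\<And>k. psd (t k *\<^sub>R B (X k) - A (X k))"
    using p unfolding X_def t_def by auto
  have tlow: "\<rho> \<le> t k" for k
  proof -
    have "ereal \<rho> \<le> rr A B (X k)" using rhohat_le_dens[OF Xt(1)[of k], of A B] unfolding \<rho> .
    also have "\<dots> \<le> ereal (t k)" by (rule rr_le[of "t k" B "X k" A, OF Xt(2) Xt(4)])
    finally show ?thesis by simp
  qed
  have tlim: "t \<longlonglongrightarrow> \<rho>"
  proof (rule tendsto_sandwich[of "\<lambda>k. \<rho>" t sequentially "\<lambda>k. \<rho> + inverse (real (Suc k))"])
    show "\<forall>\<^sub>F n in sequentially. \<rho> \<le> t n" using tlow by simp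
    show "\<forall>\<^sub>F n in sequentially. t n \<le> \<rho> + inverse (real (Suc n))" using Xt(3) by (intro always_eventually allI less_imp_le) blast
  qed (rule tendsto_const, rule LIMSEQ_inverse_real_of_nat_add)
  obtain Y \<sigma> where Y: "density Y" "strict_mono \<sigma>" "(\<lambda>k. X (\<sigma> k)) \<longlonglongrightarrow> Y"
    by (rule density_seq[OF Xt(1)])
  have ts: "(\<lambda>k. t (\<sigma> k)) \<longlonglongrightarrow> \<rho>"
    using LIMSEQ_subseq_LIMSEQ[OF tlim Y(2)] by (simp add: o_def)
  have "(\<lambda>k. t (\<sigma> k) *\<^sub>R B (X (\<sigma> k)) - A (X (\<sigma> k))) \<longlonglongrightarrow> \<rho> *\<^sub>R B Y - A Y"
    by (rule tendsto_diff[OF tendsto_scaleR[OF ts posmap_tendsto[OF assms(2) Y(3)]] posmap_tendsto[OF assms(1) Y(3)]])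
  then have "psd (\<rho> *\<^sub>R B Y - A Y)" by (rule psd_limit[OF Xt(4)])
  moreover have "0 \<le> \<rho>" using tlow[of 0] Xt(2)[of 0] \<open>0 \<le> rhohat A B\<close> \<rho> by simp
  ultimately have "rr A B Y \<le> rhohat A B" unfolding \<rho> by (rule rr_le[rotated])
  moreover have "rhohat A B \<le> rr A B Y" by (rule rhohat_le_dens[OF Y(1)])
  ultimately have "rr A B Y = rhohat A B" by simp
  then show ?thesis using Y(1) unfolding weakly_optimal_def by (intro exI[of _ Y]) (auto simp: density_psd density_nz)
qed



lemma psd_herm: "psd M \<Longrightarrow> hermitian M" unfolding psd_def by simp

lemma not_psd_neg_pd: assumes "pd (M::complex^'n^'n)" shows "\<not> psd (- M)"
proof
  assume "psd (- M)"
  obtain v :: "complex^'n" where "v \<noteq> 0" using exists_nz by blast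
  then have "0 < Re (qform M v)" using assms unfolding pd_def by simp
  moreover have "0 \<le> Re (qform (- M) v)" using \<open>psd (- M)\<close> unfolding psd_def by simp
  ultimately show False by (simp add: qform_uminus)
qed

lemma pdB_from_pdA: assumes "posmap A" "posmap B" "rr A B Y < \<infinity>" "pd (A Y)"
  shows "pd (B Y)"
proof -
  obtain r where r: "rr A B Y = ereal r" using assms(3) rr_nonneg[of A B Y]
    by (cases "rr A B Y") auto
  have "rr A B Y < ereal (r + 1)" using r by simp
  then obtain t where t: "0 \<le> t" "psd (t *\<^sub>R B Y - A Y)" using rr_less by blast
  have "t \<noteq> 0"
  proof
    assume "t = 0"
    then have "psd (- A Y)" using t(2) by simp
    then show False using not_psd_neg_pd[OF assms(4)] by simp
  qed
  then have tp: "0 < t" using t(1) by simp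
  have "pd (A Y + (t *\<^sub>R B Y - A Y))" by (rule pd_add_psd[OF assms(4) t(2)])
  then have "pd (t *\<^sub>R B Y)" by simp
  then show ?thesis using tp pd_scaleR[of "t *\<^sub>R B Y" "inverse t"] by simp
qed

lemma part4_core: fixes A B :: "complex^'n^'n \<Rightarrow> complex^'m^'m"
  assumes "posmap A" "posmap B" "weakly_optimal A B Y" "pd (B Y)"
  shows "rho A B \<le> rhohat A B"
proof (cases "rhohat A B = \<infinity>")
  case True then show ?thesis by simp
next
  case False
  obtain \<rho> where \<rho>: "rhohat A B = ereal \<rho>" using False rhohat_nonneg[of A B]
    by (cases "rhohat A B") auto
  have Y: "psd Y" "rr A B Y = ereal \<rho>" using assms(3) \<rho> unfolding weakly_optimal_def by auto
  show ?thesis unfolding \<rho>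
  proof (rule ereal_le_epsilon2)
    fix e :: real assume e: "0 < e"
    define d where "d = e / 2"
    have d: "0 < d" using e unfolding d_def by simp
    have "rr A B Y < ereal (\<rho> + d)" using Y(2) d by simp
    then obtain t where t: "0 \<le> t" "t < \<rho> + d" "psd (t *\<^sub>R B Y - A Y)" using rr_less by blast
    define P where "P = d *\<^sub>R B Y"
    have P: "pd P" unfolding P_def by (rule pd_scaleR[OF assms(4) d])
    obtain e0 where e0: "0 < e0" "\<And>M. hermitian M \<Longrightarrow> cbound M \<le> e0 \<Longrightarrow> psd (P + M)"
      using pd_nbhd[OF P] by blast
    define N where "N = (t + d) *\<^sub>R B (mat 1) - A (mat 1)"
    have hN: "hermitian N" unfolding N_def
      by (intro hermitian_diff hermitian_scaleR psd_herm posmap_psd[OF assms(2)] posmap_psd[OF assms(1)] psd_mat1)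
    define \<epsilon> where "\<epsilon> = e0 / (cbound N + 1)"
    have cN: "0 \<le> cbound N" by (rule cbound_nonneg)
    have eps: "0 < \<epsilon>" unfolding \<epsilon>_def using e0(1) cN by simp
    have "cbound (\<epsilon> *\<^sub>R N) = \<epsilon> * cbound N" using eps by (simp add: cbound_scaleR)
    also have "\<dots> \<le> e0" unfolding \<epsilon>_def using e0(1) cN by (simp add: field_simps)
    finally have "psd (P + \<epsilon> *\<^sub>R N)" using e0(2) hN by (simp add: hermitian_scaleR)
    define X where "X = Y + \<epsilon> *\<^sub>R mat 1"
    have "pd (\<epsilon> *\<^sub>R mat 1 + Y)" by (rule pd_add_psd[OF pd_scaleR[OF pd_mat1 eps] Y(1)])
    then have pX: "pd X" unfolding X_def by (simp add: add.commute)
    have eq: "(t + d) *\<^sub>R B X - A X = (t *\<^sub>R B Y - A Y) + (P + \<epsilon> *\<^sub>R N)"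
      unfolding X_def P_def N_def posmap_lin(1)[OF assms(1)] posmap_lin(1)[OF assms(2)]
        posmap_lin(3)[OF assms(1)] posmap_lin(3)[OF assms(2)]
      by (simp add: algebra_simps)
    have "psd ((t + d) *\<^sub>R B X - A X)" unfolding eq
      by (rule psd_add[OF t(3) \<open>psd (P + \<epsilon> *\<^sub>R N)\<close>])
    then have "rr A B X \<le> ereal (t + d)" using t(1) d by (intro rr_le) auto
    moreover have "rho A B \<le> rr A B X" by (rule rho_le[OF pX])
    moreover have "t + d \<le> \<rho> + e" using t(2) unfolding d_def by simp
    ultimately show "rho A B \<le> ereal \<rho> + ereal e" by (simp add: order_trans)
  qed
qed

lemma part4: fixes A B :: "complex^'n^'n \<Rightarrow> complex^'m^'m"
  assumes "posmap A" "posmap B" "weakly_optimal A B Y" "pd (B Y) \<or> pd (A Y)" "rho A B < \<infinity>"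
  shows "rho A B = rhohat A B"
proof -
  have "pd (B Y)"
  proof (cases "pd (B Y)")
    case False
    then have "pd (A Y)" using assms(4) by simp
    moreover have "rhohat A B < \<infinity>" using part1[of A B] assms(5) by (rule le_less_trans)
    then have "rr A B Y < \<infinity>" using assms(3) unfolding weakly_optimal_def by simp
    ultimately show ?thesis using pdB_from_pdA[OF assms(1,2)] by blast
  qed simp
  then have "rho A B \<le> rhohat A B" by (rule part4_core[OF assms(1,2,3)])
  then show ?thesis using part1[of A B] by simp
qed



lemma part5: fixes A B :: "complex^'n^'n \<Rightarrow> complex^'m^'m"
  assumes "posmap A" "posmap B" "rho A B < \<infinity>" "cp_gt A (\<lambda>_. 0) \<or> cp_gt B (\<lambda>_. 0)"
  shows "rho A B = rhohat A B"
proof -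
  obtain Y where Y: "density Y" "weakly_optimal A B Y" using part3[OF assms(1,2)] by blast
  have "pd (B Y) \<or> pd (A Y)" using assms(4) Y(1) unfolding cp_gt_def by auto
  then show ?thesis by (rule part4[OF assms(1,2) Y(2) _ assms(3)])
qed

lemma psd_le_pd_finite: assumes "pd (P::complex^'n^'n)" "hermitian M"
  shows "\<exists>t>0. psd (t *\<^sub>R P - M)"
proof -
  obtain e where e: "0 < e" "\<And>N. hermitian N \<Longrightarrow> cbound N \<le> e \<Longrightarrow> psd (P + N)"
    using pd_nbhd[OF assms(1)] by blast
  define c where "c = e / (cbound M + 1)"
  have cM: "0 \<le> cbound M" by (rule cbound_nonneg)
  have c: "0 < c" unfolding c_def using e(1) cM by simp
  have "cbound (- (c *\<^sub>R M)) = c * cbound M" using c by (simp add: cbound_scaleR cbound_uminus)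
  also have "\<dots> \<le> e" unfolding c_def using e(1) cM by (simp add: field_simps)
  finally have cb: "cbound (- (c *\<^sub>R M)) \<le> e" .
  have "psd (P + - (c *\<^sub>R M))" by (rule e(2)[OF hermitian_uminus[OF hermitian_scaleR[OF assms(2)]] cb])
  then have "psd (inverse c *\<^sub>R (P + - (c *\<^sub>R M)))" using c by (simp add: psd_scaleR)
  moreover have "inverse c *\<^sub>R (P + - (c *\<^sub>R M)) = inverse c *\<^sub>R P - M"
    using c by (simp add: algebra_simps)
  ultimately show ?thesis using c by (intro exI[of _ "inverse c"]) auto
qed

lemma rho_finite: fixes A B :: "complex^'n^'n \<Rightarrow> complex^'m^'m"
  assumes "posmap A" "posmap B" "cp_gt B (\<lambda>_. 0)"
  shows "rho A B < \<infinity>"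
proof -
  define Y0 where "Y0 = inverse (real CARD('n)) *\<^sub>R (mat 1 :: complex^'n^'n)"
  have d: "density Y0" unfolding Y0_def by (rule density_exists)
  have pY: "pd Y0" unfolding Y0_def by (rule pd_scaleR[OF pd_mat1]) simp
  have "pd (B Y0)" using assms(3) d unfolding cp_gt_def by auto
  moreover have "hermitian (A Y0)" using posmap_psd[OF assms(1) density_psd[OF d]] by (rule psd_herm)
  ultimately obtain t where t: "0 < t" "psd (t *\<^sub>R B Y0 - A Y0)" using psd_le_pd_finite by blast
  have "rho A B \<le> rr A B Y0" by (rule rho_le[OF pY])
  also have "\<dots> \<le> ereal t" using t by (intro rr_le) auto
  also have "\<dots> < \<infinity>" by simp
  finally show ?thesis .
qed



lemma Dnorm: "bounded_linear f \<Longrightarrow> norm (f X) \<le> norm (Blinfun f) * norm X"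
  using norm_blinfun[of "Blinfun f" X] by (simp add: bounded_linear_Blinfun_apply)

lemma lower6:
  fixes A B :: "complex^'n^'n \<Rightarrow> complex^'m^'m" and D :: "nat \<Rightarrow> complex^'n^'n \<Rightarrow> complex^'m^'m" and \<sigma> :: "nat \<Rightarrow> nat"
  assumes A: "posmap A" and B: "posmap B" and D: "\<And>l. posmap (D l)"
    and Dl: "(\<lambda>l. Blinfun (D l)) \<longlonglongrightarrow> 0"
    and c: "ereal c < rhohat A B" and \<sigma>: "strict_mono \<sigma>"
    and le: "\<And>k. rho A (\<lambda>X. B X + D (\<sigma> k) X) \<le> ereal c"
  shows False
proof -
  have "\<forall>k. \<exists>p. density (fst p) \<and> 0 \<le> snd p \<and> snd p < c + inverse (real (Suc k)) \<and>
          psd (snd p *\<^sub>R (B (fst p) + D (\<sigma> k) (fst p)) - A (fst p))"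
  proof
    fix k
    let ?B' = "\<lambda>X. B X + D (\<sigma> k) X"
    have B': "posmap ?B'" by (rule posmap_add[OF B D])
    have "rho A ?B' < ereal (c + inverse (real (Suc k)))"
      using le[of k] by (rule le_less_trans) simp
    then obtain X where X: "pd X" "rr A ?B' X < ereal (c + inverse (real (Suc k)))"
      using rho_less by blast
    have ps: "psd X" "X \<noteq> 0" using pd_imp_psd[OF X(1)] pd_nz[OF X(1)] by auto
    define Xn where "Xn = inverse (Re (mtrace X)) *\<^sub>R X"
    have dXn: "density Xn" unfolding Xn_def by (rule density_norm(1)[OF ps])
    have "rr A ?B' Xn = rr A ?B' X" unfolding Xn_def
      by (rule rr_scale[OF A B']) (simp add: psd_trace_pos[OF ps])
    then have "rr A ?B' Xn < ereal (c + inverse (real (Suc k)))" using X(2) by simp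
    then obtain t where t: "0 \<le> t" "t < c + inverse (real (Suc k))" "psd (t *\<^sub>R ?B' Xn - A Xn)"
      using rr_less by blast
    show "\<exists>p. density (fst p) \<and> 0 \<le> snd p \<and> snd p < c + inverse (real (Suc k)) \<and>
          psd (snd p *\<^sub>R (B (fst p) + D (\<sigma> k) (fst p)) - A (fst p))"
      using dXn t by (intro exI[of _ "(Xn, t)"]) simp
  qed
  then obtain p where p: "\<forall>k. density (fst (p k)) \<and> 0 \<le> snd (p k) \<and> snd (p k) < c + inverse (real (Suc k)) \<and>
          psd (snd (p k) *\<^sub>R (B (fst (p k)) + D (\<sigma> k) (fst (p k))) - A (fst (p k)))"
    by (rule choice[THEN exE])
  define X where "X k = fst (p k)" for k
  define t where "t k = snd (p k)" for k
  have Xt: "\<And>k. density (X k)" "\<And>k. 0 \<le> t k" "\<And>k. t k < c + inverse (real (Suc k))"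
    "\<And>k. psd (t k *\<^sub>R (B (X k) + D (\<sigma> k) (X k)) - A (X k))"
    using p unfolding X_def t_def by auto
  have tb: "t k \<in> {0..c+1}" for k
  proof -
    have "inverse (real (Suc k)) \<le> 1" by (simp add: inverse_le_1_iff)
    then show ?thesis using Xt(2)[of k] Xt(3)[of k] by simp
  qed
  obtain Y \<sigma>1 where Y: "density Y" "strict_mono \<sigma>1" "(\<lambda>k. X (\<sigma>1 k)) \<longlonglongrightarrow> Y"
    by (rule density_seq[OF Xt(1)])
  have "seq_compact {0..c+1}" by (rule compact_imp_seq_compact[OF compact_Icc])
  then obtain \<tau> \<sigma>2 where \<tau>: "\<tau> \<in> {0..c+1}" "strict_mono \<sigma>2" "((\<lambda>k. t (\<sigma>1 k)) \<circ> \<sigma>2) \<longlonglongrightarrow> \<tau>"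
    unfolding seq_compact_def using tb by metis
  define \<phi> where "\<phi> = \<sigma>1 \<circ> \<sigma>2"
  have \<phi>: "strict_mono \<phi>" unfolding \<phi>_def by (rule strict_mono_o[OF Y(2) \<tau>(2)])
  have X\<phi>: "(\<lambda>j. X (\<phi> j)) \<longlonglongrightarrow> Y"
    using LIMSEQ_subseq_LIMSEQ[OF Y(3) \<tau>(2)] unfolding \<phi>_def by (simp add: o_def)
  have t\<phi>: "(\<lambda>j. t (\<phi> j)) \<longlonglongrightarrow> \<tau>" using \<tau>(3) unfolding \<phi>_def by (simp add: o_def)
  have "\<tau> \<le> c"
  proof (rule LIMSEQ_le[OF t\<phi> LIMSEQ_inverse_real_of_nat_add[of c]])
    show "\<exists>N. \<forall>n\<ge>N. t (\<phi> n) \<le> c + inverse (real (Suc n))"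
    proof (intro exI allI impI)
      fix n
      have "n \<le> \<phi> n" by (rule seq_suble[OF \<phi>])
      then have iv: "inverse (real (Suc (\<phi> n))) \<le> inverse (real (Suc n))"
        by (intro le_imp_inverse_le) auto
      have "t (\<phi> n) < c + inverse (real (Suc (\<phi> n)))" by (rule Xt(3))
      then show "t (\<phi> n) \<le> c + inverse (real (Suc n))" using iv by linarith
    qed
  qed
  define K where "K = real (CARD('n)) * real (CARD('n))"
  have Bl: "(\<lambda>j. Blinfun (D (\<sigma> (\<phi> j)))) \<longlonglongrightarrow> 0"
    using LIMSEQ_subseq_LIMSEQ[OF Dl strict_mono_o[OF \<sigma> \<phi>]] by (simp add: o_def)
  have "(\<lambda>j. norm (Blinfun (D (\<sigma> (\<phi> j)))) * K) \<longlonglongrightarrow> 0 * K"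
    by (rule tendsto_mult[OF tendsto_norm_zero[OF Bl] tendsto_const])
  then have g0: "(\<lambda>j. norm (Blinfun (D (\<sigma> (\<phi> j)))) * K) \<longlonglongrightarrow> 0" by simp
  have Dlim: "(\<lambda>j. D (\<sigma> (\<phi> j)) (X (\<phi> j))) \<longlonglongrightarrow> 0"
  proof (rule Lim_null_comparison[OF _ g0])
    show "\<forall>\<^sub>F j in sequentially. norm (D (\<sigma> (\<phi> j)) (X (\<phi> j))) \<le> norm (Blinfun (D (\<sigma> (\<phi> j)))) * K"
    proof (rule always_eventually, rule allI)
      fix j
      have "norm (D (\<sigma> (\<phi> j)) (X (\<phi> j))) \<le> norm (Blinfun (D (\<sigma> (\<phi> j)))) * norm (X (\<phi> j))"
        by (rule Dnorm[OF posmap_bl[OF D]])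
      also have "\<dots> \<le> norm (Blinfun (D (\<sigma> (\<phi> j)))) * K"
        unfolding K_def by (intro mult_left_mono density_bound[OF Xt(1)]) simp
      finally show "norm (D (\<sigma> (\<phi> j)) (X (\<phi> j))) \<le> norm (Blinfun (D (\<sigma> (\<phi> j)))) * K" .
    qed
  qed
  have "(\<lambda>j. t (\<phi> j) *\<^sub>R (B (X (\<phi> j)) + D (\<sigma> (\<phi> j)) (X (\<phi> j))) - A (X (\<phi> j))) \<longlonglongrightarrow> \<tau> *\<^sub>R (B Y + 0) - A Y"
    by (rule tendsto_diff[OF tendsto_scaleR[OF t\<phi> tendsto_add[OF posmap_tendsto[OF B X\<phi>] Dlim]] posmap_tendsto[OF A X\<phi>]])
  then have "psd (\<tau> *\<^sub>R (B Y + 0) - A Y)" by (rule psd_limit[OF Xt(4)])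
  then have "psd (\<tau> *\<^sub>R B Y - A Y)" by simp
  then have "rr A B Y \<le> ereal \<tau>" using \<tau>(1) by (intro rr_le) auto
  also have "\<dots> \<le> ereal c" using \<open>\<tau> \<le> c\<close> by simp
  also have "\<dots> < rhohat A B" by (rule c)
  also have "\<dots> \<le> rr A B Y" by (rule rhohat_le_dens[OF Y(1)])
  finally show False by simp
qed



lemma part6:
  fixes A B :: "complex^'n^'n \<Rightarrow> complex^'m^'m" and D :: "nat \<Rightarrow> complex^'n^'n \<Rightarrow> complex^'m^'m"
  assumes A: "posmap A" and B: "posmap B" and D: "\<And>l. posmap (D l)"
    and Dp: "\<And>l. cp_gt (D l) (\<lambda>_. 0)"
    and Dl: "(\<lambda>l. Blinfun (D l)) \<longlonglongrightarrow> 0"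
  shows "(\<lambda>l. rho A (\<lambda>X. B X + D l X)) \<longlonglongrightarrow> rhohat A B"
proof -
  have up: "rho A (\<lambda>X. B X + D l X) \<le> rhohat A B" for l
  proof -
    let ?B' = "\<lambda>X. B X + D l X"
    have B': "posmap ?B'" by (rule posmap_add[OF B D])
    have gt: "cp_gt ?B' (\<lambda>_. 0)" unfolding cp_gt_def
    proof (intro allI impI)
      fix X :: "complex^'n^'n" assume d: "density X"
      have "pd (D l X)" using Dp[of l] d unfolding cp_gt_def by auto
      then have "pd (D l X + B X)" by (rule pd_add_psd[OF _ posmap_psd[OF B density_psd[OF d]]])
      then show "pd (B X + D l X - 0)" by (simp add: add.commute)
    qed
    have "rho A ?B' = rhohat A ?B'"
      by (rule part5[OF A B' rho_finite[OF A B' gt]]) (simp add: gt)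
    also have "rhohat A ?B' \<le> rhohat A B"
    proof -
      have c1: "cp_ge A A" unfolding cp_ge_def by simp
      have c2: "cp_ge ?B' B" unfolding cp_ge_def
      proof (intro allI impI)
        fix X :: "complex^'n^'n" assume d: "density X"
        have "pd (D l X)" using Dp[of l] d unfolding cp_gt_def by auto
        then show "psd (B X + D l X - B X)" by (simp add: pd_imp_psd)
      qed
      show ?thesis using part2[OF A A B B' c1 c2] by simp
    qed
    finally show ?thesis .
  qed
  show ?thesis
  proof (rule order_tendstoI)
    fix a assume a: "a < rhohat A B"
    show "\<forall>\<^sub>F l in sequentially. a < rho A (\<lambda>X. B X + D l X)"
    proof (rule ccontr)
      assume "\<not> (\<forall>\<^sub>F l in sequentially. a < rho A (\<lambda>X. B X + D l X))"
      then obtain \<sigma> :: "nat \<Rightarrow> nat" where \<sigma>: "strict_mono \<sigma>" "\<And>n. \<not> a < rho A (\<lambda>X. B X + D (\<sigma> n) X)"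
        using not_eventually_sequentiallyD by blast
      then have le: "\<And>n. rho A (\<lambda>X. B X + D (\<sigma> n) X) \<le> a" by (simp add: not_less)
      show False
      proof (cases a)
        case (real c)
        show False by (rule lower6[OF A B D Dl _ \<sigma>(1)]) (use a le real in auto)
      next
        case PInf then show False using a by simp
      next
        case MInf then show False using le[of 0] rho_nonneg[of A "\<lambda>X. B X + D (\<sigma> 0) X"] by simp
      qed
    qed
  next
    fix a assume a: "rhohat A B < a"
    show "\<forall>\<^sub>F l in sequentially. rho A (\<lambda>X. B X + D l X) < a"
      using up a by (intro always_eventually allI) (rule le_less_trans)
  qed
qed

lemma BX_pd: assumes B: "posmap B" and "pd (B (mat 1))" "pd X" shows "pd (B X)"
proof -
  obtain e where e: "0 < e" "\<And>M. hermitian M \<Longrightarrow> cbound M \<le> e \<Longrightarrow> psd (X + M)"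
    using pd_nbhd[OF assms(3)] by blast
  define \<epsilon> where "\<epsilon> = e / (cbound (mat 1 :: complex^'a^'a) + 1)"
  have c1: "0 \<le> cbound (mat 1 :: complex^'a^'a)" by (rule cbound_nonneg)
  have eps: "0 < \<epsilon>" unfolding \<epsilon>_def using e(1) c1 by simp
  have "cbound (- (\<epsilon> *\<^sub>R (mat 1 :: complex^'a^'a))) = \<epsilon> * cbound (mat 1 :: complex^'a^'a)"
    using eps by (simp add: cbound_uminus cbound_scaleR)
  also have "\<dots> \<le> e" unfolding \<epsilon>_def using e(1) c1 by (simp add: field_simps)
  finally have cb: "cbound (- (\<epsilon> *\<^sub>R (mat 1 :: complex^'a^'a))) \<le> e" .
  have ps: "psd (X + - (\<epsilon> *\<^sub>R mat 1))"
    by (rule e(2)[OF hermitian_uminus[OF hermitian_scaleR[OF hermitian_mat1]] cb])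
  have "pd (\<epsilon> *\<^sub>R B (mat 1) + B (X + - (\<epsilon> *\<^sub>R mat 1)))"
    by (rule pd_add_psd[OF pd_scaleR[OF assms(2) eps] posmap_psd[OF B ps]])
  moreover have "\<epsilon> *\<^sub>R B (mat 1) + B (X + - (\<epsilon> *\<^sub>R mat 1)) = B X"
  proof -
    have "X + - (\<epsilon> *\<^sub>R mat 1) = X + (- \<epsilon>) *\<^sub>R mat 1" by simp
    then have "B (X + - (\<epsilon> *\<^sub>R mat 1)) = B X + (- \<epsilon>) *\<^sub>R B (mat 1)"
      by (simp only: posmap_lin(1)[OF B] posmap_lin(3)[OF B])
    then show ?thesis by simp
  qed
  ultimately show ?thesis by simp
qed



lemma part7:
  fixes A B :: "complex^'n^'n \<Rightarrow> complex^'m^'m" and D :: "nat \<Rightarrow> complex^'n^'n \<Rightarrow> complex^'m^'m"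
  assumes A: "posmap A" and B: "posmap B" and D: "\<And>l. posmap (D l)"
    and Dp: "\<And>l. cp_gt (D l) (\<lambda>_. 0)"
    and Dl: "(\<lambda>l. Blinfun (D l)) \<longlonglongrightarrow> 0"
    and BI: "pd (B (mat 1))"
  shows "(\<lambda>l. rho (\<lambda>X. A X + D l X) B) \<longlonglongrightarrow> rho A B"
proof -
  have low: "rho A B \<le> rho (\<lambda>X. A X + D l X) B" for l
  proof -
    let ?A' = "\<lambda>X. A X + D l X"
    have A': "posmap ?A'" by (rule posmap_add[OF A D])
    have c1: "cp_ge ?A' A" unfolding cp_ge_def
    proof (intro allI impI)
      fix X :: "complex^'n^'n" assume d: "density X"
      have "pd (D l X)" using Dp[of l] d unfolding cp_gt_def by auto
      then show "psd (A X + D l X - A X)" by (simp add: pd_imp_psd)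
    qed
    have c2: "cp_ge B B" unfolding cp_ge_def by simp
    show ?thesis using part2[OF A' A B B c1 c2] by simp
  qed
  show ?thesis
  proof (rule order_tendstoI)
    fix a assume "a < rho A B"
    then show "\<forall>\<^sub>F l in sequentially. a < rho (\<lambda>X. A X + D l X) B"
      using low by (intro always_eventually allI) (rule less_le_trans)
  next
    fix a assume a: "rho A B < a"
    obtain a' where a': "rho A B < ereal a'" "ereal a' < a" using ereal_dense2[OF a] by blast
    obtain X where X: "pd X" "rr A B X < ereal a'" using rho_less[OF a'(1)] by blast
    obtain t where t: "0 \<le> t" "t < a'" "psd (t *\<^sub>R B X - A X)" using rr_less[OF X(2)] by blast
    define P where "P = (a' - t) *\<^sub>R B X"
    have P: "pd P" unfolding P_def by (rule pd_scaleR[OF BX_pd[OF B BI X(1)]]) (use t in simp)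
    obtain e where e: "0 < e" "\<And>M. hermitian M \<Longrightarrow> cbound M \<le> e \<Longrightarrow> psd (P + M)"
      using pd_nbhd[OF P] by blast
    define K where "K = real (CARD('m)) * real (CARD('m))"
    have "(\<lambda>l. K * (norm (Blinfun (D l)) * norm X)) \<longlonglongrightarrow> K * (0 * norm X)"
      by (intro tendsto_mult tendsto_const tendsto_norm_zero Dl)
    then have "(\<lambda>l. K * (norm (Blinfun (D l)) * norm X)) \<longlonglongrightarrow> 0" by simp
    then have ev: "\<forall>\<^sub>F l in sequentially. K * (norm (Blinfun (D l)) * norm X) < e"
      using e(1) by (rule order_tendstoD(2))
    show "\<forall>\<^sub>F l in sequentially. rho (\<lambda>X. A X + D l X) B < a"
      using ev
    proof (rule eventually_mono)
      fix l assume l: "K * (norm (Blinfun (D l)) * norm X) < e"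
      have "cbound (- D l X) = cbound (D l X)" by (rule cbound_uminus)
      also have "\<dots> \<le> K * norm (D l X)" unfolding K_def by (rule cbound_le)
      also have "\<dots> \<le> K * (norm (Blinfun (D l)) * norm X)"
        unfolding K_def by (intro mult_left_mono Dnorm[OF posmap_bl[OF D]]) simp
      finally have cb: "cbound (- D l X) \<le> e" using l by simp
      have hD: "hermitian (- D l X)"
        by (rule hermitian_uminus[OF psd_herm[OF posmap_psd[OF D pd_imp_psd[OF X(1)]]]])
      have "psd (P + - D l X)" by (rule e(2)[OF hD cb])
      then have ps: "psd ((t *\<^sub>R B X - A X) + (P + - D l X))" by (rule psd_add[OF t(3)])
      have eq: "(t *\<^sub>R B X - A X) + (P + - D l X) = a' *\<^sub>R B X - (A X + D l X)"
        unfolding P_def by (simp add: algebra_simps)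
      have "psd (a' *\<^sub>R B X - (A X + D l X))" using ps unfolding eq .
      then have "rr (\<lambda>X. A X + D l X) B X \<le> ereal a'"
        using t by (intro rr_le) auto
      then have "rho (\<lambda>X. A X + D l X) B \<le> ereal a'" using rho_le[OF X(1)] order_trans by blast
      then show "rho (\<lambda>X. A X + D l X) B < a" using a'(2) by (rule le_less_trans)
    qed
  qed
qed



theorem lemma7p3:
  fixes A B :: "complex^'n^'n \<Rightarrow> complex^'m^'m"
  assumes "is_CP A" and "is_CP B"
  shows "rhohat A B \<le> rho A B
    \<and> (\<forall>A1 B1. is_CP A1 \<and> is_CP B1 \<and> cp_ge A A1 \<and> cp_ge B1 B \<longrightarrow>
           rho A1 B1 \<le> rho A B \<and> rhohat A1 B1 \<le> rhohat A B)
    \<and> (\<exists>Y. density Y \<and> weakly_optimal A B Y)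
    \<and> ((\<exists>Y. weakly_optimal A B Y \<and> (pd (B Y) \<or> pd (A Y))) \<and> rho A B < \<infinity> \<longrightarrow>
           rho A B = rhohat A B)
    \<and> (rho A B < \<infinity> \<and> (cp_gt A (\<lambda>_. 0) \<or> cp_gt B (\<lambda>_. 0)) \<longrightarrow> rho A B = rhohat A B)
    \<and> (\<forall>D :: nat \<Rightarrow> complex^'n^'n \<Rightarrow> complex^'m^'m.
           (\<forall>l. is_CP (D l) \<and> cp_gt (D l) (\<lambda>_. 0)) \<and> (\<lambda>l. Blinfun (D l)) \<longlonglongrightarrow> 0 \<longrightarrow>
           (\<lambda>l. rho A (\<lambda>X. B X + D l X)) \<longlonglongrightarrow> rhohat A B)
    \<and> (\<forall>D :: nat \<Rightarrow> complex^'n^'n \<Rightarrow> complex^'m^'m.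
           (\<forall>l. is_CP (D l) \<and> cp_gt (D l) (\<lambda>_. 0)) \<and> (\<lambda>l. Blinfun (D l)) \<longlonglongrightarrow> 0
           \<and> pd (B (mat 1)) \<longrightarrow>
           (\<lambda>l. rho (\<lambda>X. A X + D l X) B) \<longlonglongrightarrow> rho A B)"
proof -
  have A: "posmap A" by (rule CP_posmap[OF assms(1)])
  have B: "posmap B" by (rule CP_posmap[OF assms(2)])
  have p2: "\<forall>A1 B1. is_CP A1 \<and> is_CP B1 \<and> cp_ge A A1 \<and> cp_ge B1 B \<longrightarrow>
           rho A1 B1 \<le> rho A B \<and> rhohat A1 B1 \<le> rhohat A B"
  proof (intro allI impI, elim conjE)
    fix A1 B1 :: "complex^'n^'n \<Rightarrow> complex^'m^'m"
    assume "is_CP A1" "is_CP B1" "cp_ge A A1" "cp_ge B1 B"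
    then show "rho A1 B1 \<le> rho A B \<and> rhohat A1 B1 \<le> rhohat A B"
      by (intro part2[OF A CP_posmap[OF \<open>is_CP A1\<close>] B CP_posmap[OF \<open>is_CP B1\<close>]])
  qed
  have p4: "(\<exists>Y. weakly_optimal A B Y \<and> (pd (B Y) \<or> pd (A Y))) \<and> rho A B < \<infinity> \<longrightarrow>
           rho A B = rhohat A B"
  proof (intro impI)
    assume H: "(\<exists>Y. weakly_optimal A B Y \<and> (pd (B Y) \<or> pd (A Y))) \<and> rho A B < \<infinity>"
    then obtain Y where Y: "weakly_optimal A B Y" "pd (B Y) \<or> pd (A Y)" by blast
    show "rho A B = rhohat A B" using H by (intro part4[OF A B Y]) simp
  qed
  have p5: "rho A B < \<infinity> \<and> (cp_gt A (\<lambda>_. 0) \<or> cp_gt B (\<lambda>_. 0)) \<longrightarrow> rho A B = rhohat A B"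
    using part5[OF A B] by blast
  have p6: "\<forall>D :: nat \<Rightarrow> complex^'n^'n \<Rightarrow> complex^'m^'m.
           (\<forall>l. is_CP (D l) \<and> cp_gt (D l) (\<lambda>_. 0)) \<and> (\<lambda>l. Blinfun (D l)) \<longlonglongrightarrow> 0 \<longrightarrow>
           (\<lambda>l. rho A (\<lambda>X. B X + D l X)) \<longlonglongrightarrow> rhohat A B"
  proof (intro allI impI, elim conjE)
    fix D :: "nat \<Rightarrow> complex^'n^'n \<Rightarrow> complex^'m^'m"
    assume H: "\<forall>l. is_CP (D l) \<and> cp_gt (D l) (\<lambda>_. 0)" "(\<lambda>l. Blinfun (D l)) \<longlonglongrightarrow> 0"
    show "(\<lambda>l. rho A (\<lambda>X. B X + D l X)) \<longlonglongrightarrow> rhohat A B"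
      by (rule part6[OF A B _ _ H(2)]) (use H(1) CP_posmap in auto)
  qed
  have p7: "\<forall>D :: nat \<Rightarrow> complex^'n^'n \<Rightarrow> complex^'m^'m.
           (\<forall>l. is_CP (D l) \<and> cp_gt (D l) (\<lambda>_. 0)) \<and> (\<lambda>l. Blinfun (D l)) \<longlonglongrightarrow> 0
           \<and> pd (B (mat 1)) \<longrightarrow>
           (\<lambda>l. rho (\<lambda>X. A X + D l X) B) \<longlonglongrightarrow> rho A B"
  proof (intro allI impI, elim conjE)
    fix D :: "nat \<Rightarrow> complex^'n^'n \<Rightarrow> complex^'m^'m"
    assume H: "\<forall>l. is_CP (D l) \<and> cp_gt (D l) (\<lambda>_. 0)" "(\<lambda>l. Blinfun (D l)) \<longlonglongrightarrow> 0" "pd (B (mat 1))"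
    show "(\<lambda>l. rho (\<lambda>X. A X + D l X) B) \<longlonglongrightarrow> rho A B"
      by (rule part7[OF A B _ _ H(2) H(3)]) (use H(1) CP_posmap in auto)
  qed
  show ?thesis using part1[of A B] p2 part3[OF A B] p4 p5 p6 p7 by blast
qed


end
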